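(* Let $\mathcal P$ be a 2-reflex orthostack made of four bricks with canonical contact rectangles, all three of which have type $1$ (i.e., its signature is $s_1s_2s_3$ with each $s_t\in\{\sqcup_1,\sqcap_1\}$). Then $\mathcal P$ is guarded by a single vertical closed face guard.
   Context: A 2-reflex orthostack is an orthogonal polyhedron with no reflex edge parallel to the vertical ($z$) axis all of whose horizontal cross-sections are simply connected; it is a stack of bricks $B_t=R_t\times[z_{t-1},z_t]$, $t=1,\dots,k$ (bottom to top), $z_0<\dots<z_k$, each $R_t$ an axis-parallel rectangle, $R_t\ne R_{t+1}$. The contact rectangle between $B_t$ and $B_{t+1}$ is $(R_t\cap R_{t+1})\times\{z_t\}$; it is canonical if one of $R_t,R_{t+1}$ is strictly contained in the other and their set difference is connected. The type of a canonical contact rectangle is the number $i\in\{1,2,3,4\}$ of sides of the smaller rectangle not contained in the boundary of the larger one. The contact is denoted $\sqcup_i$ if $R_t\subsetneq R_{t+1}$ and $\sqcap_i$ if $R_{t+1}\subsetneq R_t$. The signature is the sequence of these symbols for $t=1,\dots,k-1$, read bottom to top. A point $x$ is visible to $y$ if segment $xy$ does not meet the exterior of the polyhedron; a closed face guard is a face including its boundary; it guards the polyhedron if every point is visible from some point of it. A face is vertical if parallel to the $z$-axis. *)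

theory Defs
  imports "HOL-Analysis.Analysis"
begin

type_synonym point3 = "real \<times> real \<times> real"

text \<open>An axis-parallel rectangle [a,b] x [c,d] is encoded by its coordinates (a,b,c,d).\<close>
type_synonym rect = "real \<times> real \<times> real \<times> real"

definition rect_ok :: "rect \<Rightarrow> bool" where
  "rect_ok r = (case r of (a,b,c,d) \<Rightarrow> a < b \<and> c < d)"

definition rset :: "rect \<Rightarrow> (real \<times> real) set" where
  "rset r = (case r of (a,b,c,d) \<Rightarrow> cbox (a,c) (b,d))"

definition rsides :: "rect \<Rightarrow> (real \<times> real) set set" where
  "rsides r = (case r of (a,b,c,d) \<Rightarrow>
     {closed_segment (a,c) (b,c), closed_segment (b,c) (b,d),
      closed_segment (b,d) (a,d), closed_segment (a,d) (a,c)})"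

definition canonical_contact :: "rect \<Rightarrow> rect \<Rightarrow> bool" where
  "canonical_contact r s =
     ((rset r \<subset> rset s \<and> connected (rset s - rset r)) \<or>
      (rset s \<subset> rset r \<and> connected (rset r - rset s)))"

definition contact_type :: "rect \<Rightarrow> rect \<Rightarrow> nat" where
  "contact_type r s =
     (if rset r \<subset> rset s then card {e \<in> rsides r. \<not> e \<subseteq> frontier (rset s)}
      else card {e \<in> rsides s. \<not> e \<subseteq> frontier (rset r)})"

definition brick :: "rect \<Rightarrow> real \<Rightarrow> real \<Rightarrow> point3 set" where
  "brick r z0 z1 = {(x,y,w). (x,y) \<in> rset r \<and> z0 \<le> w \<and> w \<le> z1}"

definition orthostack :: "nat \<Rightarrow> (nat \<Rightarrow> rect) \<Rightarrow> (nat \<Rightarrow> real) \<Rightarrow> point3 set" where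
  "orthostack k R z = (\<Union>t\<in>{1..k}. brick (R t) (z (t - 1)) (z t))"

definition valid_orthostack :: "nat \<Rightarrow> (nat \<Rightarrow> rect) \<Rightarrow> (nat \<Rightarrow> real) \<Rightarrow> bool" where
  "valid_orthostack k R z =
     ((\<forall>t\<in>{1..k}. rect_ok (R t)) \<and> (\<forall>t<k. z t < z (Suc t)) \<and>
      (\<forall>t\<in>{1..<k}. rset (R t) \<noteq> rset (R (Suc t))))"

definition axis_dirs :: "point3 set" where
  "axis_dirs = {(1,0,0), (-1,0,0), (0,1,0), (0,-1,0), (0,0,1), (0,0,-1)}"

definition horizontal_dirs :: "point3 set" where
  "horizontal_dirs = {(1,0,0), (-1,0,0), (0,1,0), (0,-1,0)}"

text \<open>Relative-interior face points with outward normal u: near x, P is exactly the half-space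
  on the inner side of the plane through x orthogonal to u.\<close>
definition face_pts :: "point3 set \<Rightarrow> point3 \<Rightarrow> point3 set" where
  "face_pts P u = {x. \<exists>e>0. \<forall>y\<in>ball x e. (y \<in> P \<longleftrightarrow> inner (y - x) u \<le> 0)}"

text \<open>A closed face: closure of a maximal connected planar region of the boundary with
  a fixed outward normal.\<close>
definition closed_face :: "point3 set \<Rightarrow> point3 \<Rightarrow> point3 set \<Rightarrow> bool" where
  "closed_face P u F = (u \<in> axis_dirs \<and> (\<exists>C \<in> components (face_pts P u). F = closure C))"

definition vertical_closed_face :: "point3 set \<Rightarrow> point3 set \<Rightarrow> bool" where
  "vertical_closed_face P F = (\<exists>u \<in> horizontal_dirs. closed_face P u F)"

definition visible :: "point3 set \<Rightarrow> point3 \<Rightarrow> point3 \<Rightarrow> bool" where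
  "visible P x y = (closed_segment x y \<subseteq> P)"

definition guards :: "point3 set \<Rightarrow> point3 set \<Rightarrow> bool" where
  "guards P G = (\<forall>p\<in>P. \<exists>g\<in>G. visible P g p)"

end

theory Submission
  imports Defs
begin


lemma not_sub_frontier:
  fixes p :: "real \<times> real"
  assumes "p \<in> S" "p \<in> box (A,C) (B,D)"
  shows "\<not> S \<subseteq> frontier (cbox (A,C) (B,D))"
  using assms by (auto simp: frontier_cbox)

lemma in_box2:
  fixes x y A B C D :: real
  shows "(x,y) \<in> box (A,C) (B,D) \<longleftrightarrow> A < x \<and> x < B \<and> C < y \<and> y < D"
  by (auto simp: mem_box Basis_prod_def)
lemma in_cbox2:
  fixes x y A B C D :: real
  shows "(x,y) \<in> cbox (A,C) (B,D) \<longleftrightarrow> A \<le> x \<and> x \<le> B \<and> C \<le> y \<and> y \<le> (D::real)"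
  by (auto simp: cbox_Pair_eq)

definition mism :: "rect \<Rightarrow> rect \<Rightarrow> nat" where
 "mism r s = (case r of (a,b,c,d) \<Rightarrow> case s of (A,B,C,D) \<Rightarrow>
    (if a = A then 0 else 1) + (if b = B then 0 else 1) + (if c = C then 0 else 1) + (if d = D then 0 else 1))"

lemma L1:
  assumes ok: "a < b" "c < d" and "A < B" "C < D"
  and sub: "cbox (a,c) (b,d) \<subseteq> cbox (A,C) (B,D)"
  and card: "card {e\<in>rsides (a,b,c,d). \<not> e \<subseteq> frontier (cbox (A,C) (B,D))} = 1"
  shows "A \<le> a \<and> b \<le> B \<and> C \<le> c \<and> d \<le> D \<and> mism (a,b,c,d) (A,B,C,D) \<le> 1"
proof -
  have "(a,c) \<in> cbox (A,C) (B,D)" "(b,d) \<in> cbox (A,C) (B,D)"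
  proof -
    have "(a,c) \<in> cbox (a,c) (b,d)" "(b,d) \<in> cbox (a,c) (b,d)" using ok by (simp_all add: in_cbox2)
    then show "(a,c) \<in> cbox (A,C) (B,D)" "(b,d) \<in> cbox (A,C) (B,D)" using sub by blast+
  qed
  hence le: "A \<le> a" "b \<le> B" "C \<le> c" "d \<le> D" by (auto simp: in_cbox2)
  define M where "M = {e\<in>rsides (a,b,c,d). \<not> e \<subseteq> frontier (cbox (A,C) (B,D))}"
  define s1 where "s1 = closed_segment (a,c) (b,c)"
  define s2 where "s2 = closed_segment (b,c) (b,d)"
  define s3 where "s3 = closed_segment (b,d) (a,d)"
  define s4 where "s4 = closed_segment (a,d) (a,c)"
  have rs: "rsides (a,b,c,d) = {s1,s2,s3,s4}" by (simp add: rsides_def s1_def s2_def s3_def s4_def)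
  have m1: "c \<noteq> C \<Longrightarrow> s1 \<in> M"
  proof -
    assume "c \<noteq> C"
    have "midpoint (a,c) (b,c) \<in> box (A,C) (B,D)"
      using le ok \<open>c \<noteq> C\<close> by (simp add: midpoint_def in_box2)
    then show ?thesis unfolding M_def rs s1_def
      using not_sub_frontier[OF midpoint_in_closed_segment] by auto
  qed
  have m2: "b \<noteq> B \<Longrightarrow> s2 \<in> M"
  proof -
    assume "b \<noteq> B"
    have "midpoint (b,c) (b,d) \<in> box (A,C) (B,D)"
      using le ok \<open>b \<noteq> B\<close> by (simp add: midpoint_def in_box2)
    then show ?thesis unfolding M_def rs s2_def
      using not_sub_frontier[OF midpoint_in_closed_segment] by auto
  qed
  have m3: "d \<noteq> D \<Longrightarrow> s3 \<in> M"
  proof -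
    assume "d \<noteq> D"
    have "midpoint (b,d) (a,d) \<in> box (A,C) (B,D)"
      using le ok \<open>d \<noteq> D\<close> by (simp add: midpoint_def in_box2)
    then show ?thesis unfolding M_def rs s3_def
      using not_sub_frontier[OF midpoint_in_closed_segment] by auto
  qed
  have m4: "a \<noteq> A \<Longrightarrow> s4 \<in> M"
  proof -
    assume "a \<noteq> A"
    have "midpoint (a,d) (a,c) \<in> box (A,C) (B,D)"
      using le ok \<open>a \<noteq> A\<close> by (simp add: midpoint_def in_box2)
    then show ?thesis unfolding M_def rs s4_def
      using not_sub_frontier[OF midpoint_in_closed_segment] by auto
  qed
  have dist: "s1 \<noteq> s2" "s1 \<noteq> s3" "s1 \<noteq> s4" "s2 \<noteq> s3" "s2 \<noteq> s4" "s3 \<noteq> s4"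
    using ok unfolding s1_def s2_def s3_def s4_def closed_segment_eq
    by (auto simp: doubleton_eq_iff)
  obtain m where Mm: "M = {m}" using card unfolding M_def[symmetric] by (rule card_1_singletonE)
  show ?thesis using le m1 m2 m3 m4 dist unfolding Mm mism_def
    by (auto split: if_splits)
qed



lemma inner_le_norm_unit:
  fixes x v :: "'a::real_inner"
  assumes "v \<bullet> v = 1"
  shows "\<bar>x \<bullet> v\<bar> \<le> norm x"
proof -
  have "norm v = 1" using assms by (simp add: norm_eq_sqrt_inner)
  then show ?thesis using Cauchy_Schwarz_ineq2[of x v] by simp
qed

lemma connected_chain:
  assumes "connected A" "connected B" "A \<inter> X \<noteq> {}" "X \<subseteq> B"
  shows "connected (A \<union> B)"
  using assms by (intro connected_Un) auto

lemma wall_guard: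
  fixes u v e :: point3 and \<alpha> \<beta> \<gamma> z :: "nat \<Rightarrow> real" and h :: real and P :: "point3 set"
  assumes P0: "P = (\<Union>t\<in>{1..4::nat}. {p. \<alpha> t \<le> p\<bullet>v \<and> p\<bullet>v \<le> \<beta> t \<and> \<gamma> t \<le> p\<bullet>u \<and> p\<bullet>u \<le> h \<and> z (t-1) \<le> p\<bullet>e \<and> p\<bullet>e \<le> z t})"
  and o: "u\<bullet>u = 1" "v\<bullet>v = 1" "e\<bullet>e = 1" "u\<bullet>v = 0" "u\<bullet>e = 0" "v\<bullet>e = 0"
  and dec: "\<And>p. p = (p\<bullet>v) *\<^sub>R v + (p\<bullet>u) *\<^sub>R u + (p\<bullet>e) *\<^sub>R e"
  and ab: "\<And>t. t\<in>{1..4} \<Longrightarrow> \<alpha> t < \<beta> t \<and> \<gamma> t < h"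
  and zz: "\<And>t. t<4 \<Longrightarrow> z t < z (Suc t)"
  and nest: "\<And>t. t\<in>{1..3} \<Longrightarrow> max (\<alpha> t) (\<alpha> (Suc t)) < min (\<beta> t) (\<beta> (Suc t))"
  shows "\<exists>F. (\<exists>C\<in>components (face_pts P u). F = closure C) \<and> guards P F"
proof -
  define B where "B = (\<lambda>t. {p. \<alpha> t \<le> p\<bullet>v \<and> p\<bullet>v \<le> \<beta> t \<and> \<gamma> t \<le> p\<bullet>u \<and> p\<bullet>u \<le> h \<and> z (t-1) \<le> p\<bullet>e \<and> p\<bullet>e \<le> z t})"
  have P: "P = (\<Union>t\<in>{1..4::nat}. B t)" using P0 by (simp add: B_def)
  have o2: "v\<bullet>u = 0" "e\<bullet>u = 0" "e\<bullet>v = 0" using o by (simp_all add: inner_commute)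
  define f where "f = (\<lambda>x::real\<times>real. fst x *\<^sub>R v + h *\<^sub>R u + snd x *\<^sub>R e)"
  have fv: "f x \<bullet> v = fst x" and fu: "f x \<bullet> u = h" and fe: "f x \<bullet> e = snd x" for x
    using o o2 by (auto simp: f_def inner_add_left)
  have contf: "continuous_on UNIV f" unfolding f_def by (intro continuous_intros)
  have bv: "\<bar>q\<bullet>v - x\<bullet>v\<bar> \<le> norm (q - x)" for q x
    using inner_le_norm_unit[OF o(2), of "q-x"] by (simp add: inner_diff_left)
  have bu: "\<bar>q\<bullet>u - x\<bullet>u\<bar> \<le> norm (q - x)" for q x
    using inner_le_norm_unit[OF o(1), of "q-x"] by (simp add: inner_diff_left)
  have be: "\<bar>q\<bullet>e - x\<bullet>e\<bar> \<le> norm (q - x)" for q x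
    using inner_le_norm_unit[OF o(3), of "q-x"] by (simp add: inner_diff_left)
  have Pu: "x\<bullet>u \<le> h" if "x \<in> P" for x using that by (auto simp: P B_def)
  have FP: "p \<in> face_pts P u" if "p\<bullet>u = h" "\<epsilon>>0" "\<And>q. norm (q - p) < \<epsilon> \<Longrightarrow> q\<bullet>u \<le> h \<Longrightarrow> q \<in> P" for p \<epsilon>
    unfolding face_pts_def
  proof (intro CollectI exI[of _ \<epsilon>] conjI ballI)
    show "\<epsilon>>0" by fact
    fix y assume "y \<in> ball p \<epsilon>"
    then have "norm (y - p) < \<epsilon>" by (simp add: dist_norm norm_minus_commute)
    then show "(y \<in> P) = (inner (y - p) u \<le> 0)" using that(1) that(3)[of y] Pu[of y] by (auto simp: inner_diff_left)
  qed
  define S where "S t = f ` ({\<alpha> t<..<\<beta> t} \<times> {z (t-1)<..<z t})" for t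
  define T where "T t = f ` ({max (\<alpha> t) (\<alpha> (Suc t))<..<min (\<beta> t) (\<beta> (Suc t))} \<times> {z (t-1)<..<z (Suc t)})" for t
  have SF: "S t \<subseteq> face_pts P u" if t: "t\<in>{1..4}" for t
  proof
    fix x assume "x \<in> S t"
    then obtain s w where x: "x = f (s,w)" and s: "\<alpha> t < s" "s < \<beta> t" and w: "z(t-1) < w" "w < z t"
      by (auto simp: S_def)
    define \<epsilon> where "\<epsilon> = min (min (s - \<alpha> t) (\<beta> t - s)) (min (min (w - z(t-1)) (z t - w)) (h - \<gamma> t))"
    have "\<epsilon> > 0" using s w ab[OF t] by (simp add: \<epsilon>_def)
    show "x \<in> face_pts P u"
    proof (rule FP)
      show "x\<bullet>u = h" using x fu by simp
      show "\<epsilon>>0" by fact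
      fix q assume q: "norm (q - x) < \<epsilon>" "q\<bullet>u \<le> h"
      have xv: "x\<bullet>v = s" "x\<bullet>e = w" "x\<bullet>u = h" using x fv fe fu by auto
      have "\<bar>q\<bullet>v - s\<bar> < \<epsilon>" "\<bar>q\<bullet>u - h\<bar> < \<epsilon>" "\<bar>q\<bullet>e - w\<bar> < \<epsilon>"
        using q(1) bv[of q x] bu[of q x] be[of q x] xv by auto
      moreover have "\<epsilon> \<le> s - \<alpha> t" "\<epsilon> \<le> \<beta> t - s" "\<epsilon> \<le> w - z(t-1)" "\<epsilon> \<le> z t - w" "\<epsilon> \<le> h - \<gamma> t"
        by (auto simp: \<epsilon>_def)
      ultimately have "q \<in> B t" unfolding B_def using q(2) by (auto simp: abs_less_iff)
      then show "q \<in> P" using t P by blast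
    qed
  qed
  have TF: "T t \<subseteq> face_pts P u" if t: "t\<in>{1..3}" for t
  proof
    have t1: "t \<in> {1..4}" "Suc t \<in> {1..4}" using t by auto
    fix x assume "x \<in> T t"
    then obtain s w where x: "x = f (s,w)" and s: "max (\<alpha> t) (\<alpha> (Suc t)) < s" "s < min (\<beta> t) (\<beta> (Suc t))"
      and w: "z(t-1) < w" "w < z (Suc t)"
      by (auto simp: T_def)
    define \<epsilon> where "\<epsilon> = min (min (s - max (\<alpha> t) (\<alpha> (Suc t))) (min (\<beta> t) (\<beta> (Suc t)) - s))
       (min (min (w - z(t-1)) (z (Suc t) - w)) (min (h - \<gamma> t) (h - \<gamma> (Suc t))))"
    have "\<epsilon> > 0" using s w ab[OF t1(1)] ab[OF t1(2)] by (simp add: \<epsilon>_def)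
    show "x \<in> face_pts P u"
    proof (rule FP)
      show "x\<bullet>u = h" using x fu by simp
      show "\<epsilon>>0" by fact
      fix q assume q: "norm (q - x) < \<epsilon>" "q\<bullet>u \<le> h"
      have xv: "x\<bullet>v = s" "x\<bullet>e = w" "x\<bullet>u = h" using x fv fe fu by auto
      have "\<bar>q\<bullet>v - s\<bar> < \<epsilon>" "\<bar>q\<bullet>u - h\<bar> < \<epsilon>" "\<bar>q\<bullet>e - w\<bar> < \<epsilon>"
        using q(1) bv[of q x] bu[of q x] be[of q x] xv by auto
      moreover have "\<epsilon> \<le> s - \<alpha> t" "\<epsilon> \<le> s - \<alpha> (Suc t)" "\<epsilon> \<le> \<beta> t - s" "\<epsilon> \<le> \<beta> (Suc t) - s"
        "\<epsilon> \<le> w - z(t-1)" "\<epsilon> \<le> z (Suc t) - w" "\<epsilon> \<le> h - \<gamma> t" "\<epsilon> \<le> h - \<gamma> (Suc t)"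
        by (auto simp: \<epsilon>_def min_def max_def)
      ultimately have "q \<in> B t \<or> q \<in> B (Suc t)" unfolding B_def using q(2)
        by (cases "q\<bullet>e \<le> z t") (auto simp: abs_less_iff)
      then show "q \<in> P" using t1 P by blast
    qed
  qed
  have cS: "connected (S t)" for t
    unfolding S_def by (intro connected_continuous_image continuous_on_subset[OF contf] convex_connected convex_Times) auto
  have cT: "connected (T t)" for t
    unfolding T_def by (intro connected_continuous_image continuous_on_subset[OF contf] convex_connected convex_Times) auto
  have I1: "S t \<inter> T t \<noteq> {}" and I2: "T t \<inter> S (Suc t) \<noteq> {}" if t: "t \<in> {1..3}" for t
  proof -
    define m where "m = (max (\<alpha> t) (\<alpha> (Suc t)) + min (\<beta> t) (\<beta> (Suc t))) / 2"
    have m: "max (\<alpha> t) (\<alpha> (Suc t)) < m" "m < min (\<beta> t) (\<beta> (Suc t))" using nest[OF t] by (auto simp: m_def)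
    have z1: "z (t-1) < z t" "z t < z (Suc t)" using zz[of "t-1"] zz[of t] t by auto
    have "f (m, (z(t-1) + z t)/2) \<in> S t \<inter> T t"
      unfolding S_def T_def using m z1 by (intro IntI imageI) auto
    then show "S t \<inter> T t \<noteq> {}" by blast
    have "f (m, (z t + z (Suc t))/2) \<in> T t \<inter> S (Suc t)"
      unfolding S_def T_def using m z1 by (intro IntI imageI) auto
    then show "T t \<inter> S (Suc t) \<noteq> {}" by blast
  qed
  define SS where "SS = S 1 \<union> T 1 \<union> S 2 \<union> T 2 \<union> S 3 \<union> T 3 \<union> S 4"
  have J: "S 1 \<inter> T 1 \<noteq> {}" "T 1 \<inter> S 2 \<noteq> {}" "S 2 \<inter> T 2 \<noteq> {}" "T 2 \<inter> S 3 \<noteq> {}"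
     "S 3 \<inter> T 3 \<noteq> {}" "T 3 \<inter> S 4 \<noteq> {}"
    using I1[of 1] I2[of 1] I1[of 2] I2[of 2] I1[of 3] I2[of 3] by (simp_all add: eval_nat_numeral)
  have c1: "connected (S 1 \<union> T 1)" by (rule connected_Un[OF cS cT J(1)])
  have c2: "connected (S 1 \<union> T 1 \<union> S 2)" by (rule connected_Un[OF c1 cS]) (use J(2) in blast)
  have c3: "connected (S 1 \<union> T 1 \<union> S 2 \<union> T 2)" by (rule connected_Un[OF c2 cT]) (use J(3) in blast)
  have c4: "connected (S 1 \<union> T 1 \<union> S 2 \<union> T 2 \<union> S 3)" by (rule connected_Un[OF c3 cS]) (use J(4) in blast)
  have c5: "connected (S 1 \<union> T 1 \<union> S 2 \<union> T 2 \<union> S 3 \<union> T 3)" by (rule connected_Un[OF c4 cT]) (use J(5) in blast)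
  have cSS: "connected SS" unfolding SS_def by (rule connected_Un[OF c5 cS]) (use J(6) in blast)
  have SSF: "SS \<subseteq> face_pts P u" unfolding SS_def using SF TF by auto
  obtain x0 where x0: "x0 \<in> S 1" using I1[of 1] by auto
  define C where "C = connected_component_set (face_pts P u) x0"
  have x0F: "x0 \<in> face_pts P u" using x0 SF[of 1] by auto
  have SSC: "SS \<subseteq> C" unfolding C_def
    by (rule connected_component_maximal[OF _ cSS SSF]) (use x0 SS_def in auto)
  have SC: "S t \<subseteq> C" if "t \<in> {1..4}" for t
    using that SSC unfolding SS_def by (auto simp: numeral_eq_Suc le_Suc_eq)
  show ?thesis
  proof (intro exI conjI)
    show "\<exists>C'\<in>components (face_pts P u). closure C = closure C'"
      using componentsI[OF x0F] C_def by blast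
    show "guards P (closure C)" unfolding guards_def
    proof
      fix p assume "p \<in> P"
      then obtain t where t: "t \<in> {1..4}" and pB: "p \<in> B t" using P by auto
      define g where "g = f (p\<bullet>v, p\<bullet>e)"
      have z1: "z (t-1) < z t" using zz[of "t-1"] t by auto
      have gp: "g = p + (h - p\<bullet>u) *\<^sub>R u"
        using dec[of p] unfolding g_def f_def by (simp add: algebra_simps)
      have "(p\<bullet>v, p\<bullet>e) \<in> closure ({\<alpha> t<..<\<beta> t} \<times> {z (t-1)<..<z t})"
        using pB ab[OF t] z1 by (simp add: closure_Times B_def)
      then have "g \<in> closure (S t)"
        using continuous_image_closure_subset[OF contf] unfolding g_def S_def by blast
      then have gC: "g \<in> closure C" using closure_mono[OF SC[OF t]] by blast
      have "closed_segment g p \<subseteq> P"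
      proof
        fix y assume "y \<in> closed_segment g p"
        then obtain l where l: "0 \<le> l" "l \<le> 1" and y: "y = (1 - l) *\<^sub>R g + l *\<^sub>R p"
          by (auto simp: closed_segment_def)
        define k where "k = h - p\<bullet>u"
        have k0: "k \<ge> 0" using pB by (simp add: B_def k_def)
        have yy: "y = p + ((1-l)*k) *\<^sub>R u" unfolding y gp k_def by (simp add: algebra_simps)
        have "y\<bullet>v = p\<bullet>v" "y\<bullet>e = p\<bullet>e" "y\<bullet>u = p\<bullet>u + (1-l)*k"
          unfolding yy using o o2 by (simp_all add: inner_add_left)
        moreover have "0 \<le> (1-l)*k" "(1-l)*k \<le> k" using l k0
          by (simp_all add: mult_left_le_one_le)
        ultimately have "y \<in> B t" using pB by (auto simp: B_def k_def)
        then show "y \<in> P" using t P by blast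
      qed
      then show "\<exists>g\<in>closure C. visible P g p" using gC by (auto simp: visible_def)
    qed
  qed
qed



lemma L2:
  assumes "rect_ok (a,b,c,d)" "rect_ok (A,B,C,D)" "canonical_contact (a,b,c,d) (A,B,C,D)"
    "contact_type (a,b,c,d) (A,B,C,D) = 1"
  shows "mism (a,b,c,d) (A,B,C,D) \<le> 1 \<and> max a A < min b B \<and> max c C < min d D"
proof (cases "rset (a,b,c,d) \<subset> rset (A,B,C,D)")
  case True
  have "A \<le> a \<and> b \<le> B \<and> C \<le> c \<and> d \<le> D \<and> mism (a,b,c,d) (A,B,C,D) \<le> 1"
    using assms True by (intro L1) (auto simp: rect_ok_def rset_def contact_type_def)
  then show ?thesis using assms(1) by (auto simp: rect_ok_def)
next
  case False
  then have sub: "rset (A,B,C,D) \<subset> rset (a,b,c,d)" using assms(3) by (auto simp: canonical_contact_def)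
  have "a \<le> A \<and> B \<le> b \<and> c \<le> C \<and> D \<le> d \<and> mism (A,B,C,D) (a,b,c,d) \<le> 1"
    using assms False sub by (intro L1) (auto simp: rect_ok_def rset_def contact_type_def)
  moreover have "mism (A,B,C,D) (a,b,c,d) = mism (a,b,c,d) (A,B,C,D)"
    by (simp add: mism_def eq_commute)
  ultimately show ?thesis using assms(2) by (auto simp: rect_ok_def)
qed

lemma from_dirs:
  fixes u v e :: point3 and \<alpha> \<beta> \<gamma> z :: "nat \<Rightarrow> real" and h :: real and P :: "point3 set"
  assumes P: "P = (\<Union>t\<in>{1..4::nat}. {p. \<alpha> t \<le> p\<bullet>v \<and> p\<bullet>v \<le> \<beta> t \<and> \<gamma> t \<le> p\<bullet>u \<and> p\<bullet>u \<le> h \<and> z (t-1) \<le> p\<bullet>e \<and> p\<bullet>e \<le> z t})"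
  and hu: "u \<in> horizontal_dirs"
  and o: "u\<bullet>u = 1" "v\<bullet>v = 1" "e\<bullet>e = 1" "u\<bullet>v = 0" "u\<bullet>e = 0" "v\<bullet>e = 0"
  and dec: "\<And>p. p = (p\<bullet>v) *\<^sub>R v + (p\<bullet>u) *\<^sub>R u + (p\<bullet>e) *\<^sub>R e"
  and ab: "\<And>t. t\<in>{1..4} \<Longrightarrow> \<alpha> t < \<beta> t \<and> \<gamma> t < h"
  and zz: "\<And>t. t<4 \<Longrightarrow> z t < z (Suc t)"
  and nest: "\<And>t. t\<in>{1..3} \<Longrightarrow> max (\<alpha> t) (\<alpha> (Suc t)) < min (\<beta> t) (\<beta> (Suc t))"
  shows "\<exists>F. vertical_closed_face P F \<and> guards P F"
proof -
  obtain F where "(\<exists>C\<in>components (face_pts P u). F = closure C) \<and> guards P F"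
    using wall_guard[where P=P and u=u and v=v and e=e and \<alpha>=\<alpha> and \<beta>=\<beta> and \<gamma>=\<gamma> and h=h and z=z, OF P o dec ab zz nest] by blast
  moreover have "u \<in> axis_dirs" using hu by (auto simp: horizontal_dirs_def axis_dirs_def)
  ultimately show ?thesis using hu unfolding vertical_closed_face_def closed_face_def by blast
qed

theorem mainTheorem11:
  fixes R :: "nat \<Rightarrow> rect" and z :: "nat \<Rightarrow> real"
  assumes "valid_orthostack 4 R z"
    and "\<forall>t\<in>{1..3}. canonical_contact (R t) (R (Suc t)) \<and> contact_type (R t) (R (Suc t)) = 1"
  shows "\<exists>F. vertical_closed_face (orthostack 4 R z) F \<and> guards (orthostack 4 R z) F"
proof -
  define a where "a t = fst (R t)" for t
  define b where "b t = fst (snd (R t))" for t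
  define c where "c t = fst (snd (snd (R t)))" for t
  define d where "d t = snd (snd (snd (R t)))" for t
  have Rt: "R t = (a t, b t, c t, d t)" for t by (simp add: a_def b_def c_def d_def)
  have ok: "a t < b t \<and> c t < d t" if "t \<in> {1..4}" for t
  proof -
    have "rect_ok (R t)" using assms(1) that by (simp add: valid_orthostack_def)
    then show ?thesis by (simp add: Rt rect_ok_def)
  qed
  have zz: "\<And>t. t<4 \<Longrightarrow> z t < z (Suc t)" using assms(1) by (simp add: valid_orthostack_def)
  have con: "mism (R t) (R (Suc t)) \<le> 1 \<and> max (a t) (a (Suc t)) < min (b t) (b (Suc t))
      \<and> max (c t) (c (Suc t)) < min (d t) (d (Suc t))" if t: "t \<in> {1..3}" for t
  proof -
    have "t \<in> {1..4}" "Suc t \<in> {1..4}" using t by auto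
    then have "rect_ok (R t)" "rect_ok (R (Suc t))" using assms(1) by (auto simp: valid_orthostack_def)
    then show ?thesis using assms(2) t L2[of "a t" "b t" "c t" "d t" "a (Suc t)" "b (Suc t)" "c (Suc t)" "d (Suc t)"]
      unfolding Rt by auto
  qed
  have con': "(if a t = a (Suc t) then 0 else 1) + (if b t = b (Suc t) then 0 else 1)
     + (if c t = c (Suc t) then 0 else 1) + (if d t = d (Suc t) then 0 else 1) \<le> (1::nat)"
    if "t \<in> {1..3}" for t using con[OF that] unfolding Rt mism_def by simp
  have m1: "(if a 1 = a 2 then 0 else 1) + (if b 1 = b 2 then 0 else 1)
     + (if c 1 = c 2 then 0 else 1) + (if d 1 = d 2 then 0 else 1) \<le> (1::nat)"
    using con'[of 1] by (simp add: eval_nat_numeral)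
  have m2: "(if a 2 = a 3 then 0 else 1) + (if b 2 = b 3 then 0 else 1)
     + (if c 2 = c 3 then 0 else 1) + (if d 2 = d 3 then 0 else 1) \<le> (1::nat)"
    using con'[of 2] by (simp add: eval_nat_numeral)
  have m3: "(if a 3 = a 4 then 0 else 1) + (if b 3 = b 4 then 0 else 1)
     + (if c 3 = c 4 then 0 else 1) + (if d 3 = d 4 then 0 else 1) \<le> (1::nat)"
    using con'[of 3] by (simp add: eval_nat_numeral)
  have one_const: "(a 1 = a 2 \<and> a 2 = a 3 \<and> a 3 = a 4) \<or> (b 1 = b 2 \<and> b 2 = b 3 \<and> b 3 = b 4)
     \<or> (c 1 = c 2 \<and> c 2 = c 3 \<and> c 3 = c 4) \<or> (d 1 = d 2 \<and> d 2 = d 3 \<and> d 3 = d 4)"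
  proof (rule ccontr)
    assume n: "\<not> ?thesis"
    have "(if a 1 = a 2 then 0 else 1) + (if a 2 = a 3 then 0 else 1) + (if a 3 = a 4 then 0 else 1) \<ge> (1::nat)"
         "(if b 1 = b 2 then 0 else 1) + (if b 2 = b 3 then 0 else 1) + (if b 3 = b 4 then 0 else 1) \<ge> (1::nat)"
         "(if c 1 = c 2 then 0 else 1) + (if c 2 = c 3 then 0 else 1) + (if c 3 = c 4 then 0 else 1) \<ge> (1::nat)"
         "(if d 1 = d 2 then 0 else 1) + (if d 2 = d 3 then 0 else 1) + (if d 3 = d 4 then 0 else 1) \<ge> (1::nat)"
      using n by auto
    then show False using m1 m2 m3 by linarith
  qed
  have nestx: "\<And>t. t\<in>{1..3} \<Longrightarrow> max (a t) (a (Suc t)) < min (b t) (b (Suc t))"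
   and nesty: "\<And>t. t\<in>{1..3} \<Longrightarrow> max (c t) (c (Suc t)) < min (d t) (d (Suc t))" using con by auto
  have four: "t \<in> {1..4} \<longleftrightarrow> t = 1 \<or> t = 2 \<or> t = 3 \<or> t = (4::nat)" for t by auto
  have brick: "brick (R t) (z (t-1)) (z t) = {(x,y,w). a t \<le> x \<and> x \<le> b t \<and> c t \<le> y \<and> y \<le> d t \<and> z (t-1) \<le> w \<and> w \<le> z t}" for t
    unfolding Rt brick_def rset_def by (simp add: in_cbox2)
  have OS: "orthostack 4 R z = (\<Union>t\<in>{1..4}. {(x,y,w). a t \<le> x \<and> x \<le> b t \<and> c t \<le> y \<and> y \<le> d t \<and> z (t-1) \<le> w \<and> w \<le> z t})"
    unfolding orthostack_def brick ..
  from one_const show ?thesis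
  proof (elim disjE)
    assume h: "a 1 = a 2 \<and> a 2 = a 3 \<and> a 3 = a 4"
    have hc: "a t = a 1" if "t \<in> {1..4}" for t using that h unfolding four by (elim disjE) auto
    have hok: "a 1 < b t" if "t \<in> {1..4}" for t using ok[OF that] hc[OF that] by simp
    show ?thesis
    proof (rule from_dirs[where u="(-1,0,0)" and v="(0,1,0)" and e="(0,0,1)" and \<alpha>=c and \<beta>=d
         and \<gamma>="\<lambda>t. - b t" and h="- a 1" and z=z])
      show "orthostack 4 R z = (\<Union>t\<in>{1..4::nat}. {p. c t \<le> p\<bullet>(0,1,0) \<and> p\<bullet>(0,1,0) \<le> d t \<and> - b t \<le> p\<bullet>(-1,0,0) \<and> p\<bullet>(-1,0,0) \<le> - a 1 \<and> z (t-1) \<le> p\<bullet>(0,0,1) \<and> p\<bullet>(0,0,1) \<le> z t})"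
        unfolding OS apply (rule SUP_cong[OF refl]) apply (frule hc) by auto
    qed (use h hok ok zz nesty in \<open>auto simp: horizontal_dirs_def four\<close>)
  next
    assume h: "b 1 = b 2 \<and> b 2 = b 3 \<and> b 3 = b 4"
    have hc: "b t = b 1" if "t \<in> {1..4}" for t using that h unfolding four by (elim disjE) auto
    have hok: "a t < b 1" if "t \<in> {1..4}" for t using ok[OF that] hc[OF that] by simp
    show ?thesis
    proof (rule from_dirs[where u="(1,0,0)" and v="(0,1,0)" and e="(0,0,1)" and \<alpha>=c and \<beta>=d
         and \<gamma>=a and h="b 1" and z=z])
      show "orthostack 4 R z = (\<Union>t\<in>{1..4::nat}. {p. c t \<le> p\<bullet>(0,1,0) \<and> p\<bullet>(0,1,0) \<le> d t \<and> a t \<le> p\<bullet>(1,0,0) \<and> p\<bullet>(1,0,0) \<le> b 1 \<and> z (t-1) \<le> p\<bullet>(0,0,1) \<and> p\<bullet>(0,0,1) \<le> z t})"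
        unfolding OS apply (rule SUP_cong[OF refl]) apply (frule hc) by auto
    qed (use h hok ok zz nesty in \<open>auto simp: horizontal_dirs_def four\<close>)
  next
    assume h: "c 1 = c 2 \<and> c 2 = c 3 \<and> c 3 = c 4"
    have hc: "c t = c 1" if "t \<in> {1..4}" for t using that h unfolding four by (elim disjE) auto
    have hok: "c 1 < d t" if "t \<in> {1..4}" for t using ok[OF that] hc[OF that] by simp
    show ?thesis
    proof (rule from_dirs[where u="(0,-1,0)" and v="(1,0,0)" and e="(0,0,1)" and \<alpha>=a and \<beta>=b
         and \<gamma>="\<lambda>t. - d t" and h="- c 1" and z=z])
      show "orthostack 4 R z = (\<Union>t\<in>{1..4::nat}. {p. a t \<le> p\<bullet>(1,0,0) \<and> p\<bullet>(1,0,0) \<le> b t \<and> - d t \<le> p\<bullet>(0,-1,0) \<and> p\<bullet>(0,-1,0) \<le> - c 1 \<and> z (t-1) \<le> p\<bullet>(0,0,1) \<and> p\<bullet>(0,0,1) \<le> z t})"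
        unfolding OS apply (rule SUP_cong[OF refl]) apply (frule hc) by auto
    qed (use h hok ok zz nestx in \<open>auto simp: horizontal_dirs_def four\<close>)
  next
    assume h: "d 1 = d 2 \<and> d 2 = d 3 \<and> d 3 = d 4"
    have hc: "d t = d 1" if "t \<in> {1..4}" for t using that h unfolding four by (elim disjE) auto
    have hok: "c t < d 1" if "t \<in> {1..4}" for t using ok[OF that] hc[OF that] by simp
    show ?thesis
    proof (rule from_dirs[where u="(0,1,0)" and v="(1,0,0)" and e="(0,0,1)" and \<alpha>=a and \<beta>=b
         and \<gamma>=c and h="d 1" and z=z])
      show "orthostack 4 R z = (\<Union>t\<in>{1..4::nat}. {p. a t \<le> p\<bullet>(1,0,0) \<and> p\<bullet>(1,0,0) \<le> b t \<and> c t \<le> p\<bullet>(0,1,0) \<and> p\<bullet>(0,1,0) \<le> d 1 \<and> z (t-1) \<le> p\<bullet>(0,0,1) \<and> p\<bullet>(0,0,1) \<le> z t})"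
        unfolding OS apply (rule SUP_cong[OF refl]) apply (frule hc) by auto
    qed (use h hok ok zz nestx in \<open>auto simp: horizontal_dirs_def four\<close>)
  qed
qed

end
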